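(* Under the hypotheses of the following setting: $C_{ti},L^C_{ti},R^C_{ti},\eta_i>0$, $k^C_{1,i},k^C_{2,i},k^C_{3,i}\in\mathbb{R}$, $F_i^C$ as below, $P_i^C$ a real symmetric $3\times3$ matrix of the form $\begin{bmatrix}\eta_i&0&0\\0&p^C_{22,i}&p^C_{23,i}\\0&p^C_{23,i}&p^C_{33,i}\end{bmatrix}$ with $P_i^C>0$, and $Q_i^C=(F_i^C)^TP_i^C+P_i^CF_i^C$ satisfying $Q_i^C\le0$ and $Q_i^C\ne0$. Then for $w\in\mathbb{R}^3$ one has $w^TQ_i^Cw=0$ if and only if $w=(\alpha,0,\beta)^T$ for some $\alpha,\beta\in\mathbb{R}$.
   Context: $F_i^C=\begin{bmatrix}0&\frac{1}{C_{ti}}&0\\ \frac{k^C_{1,i}-1}{L^C_{ti}}&\frac{k^C_{2,i}-R^C_{ti}}{L^C_{ti}}&\frac{k^C_{3,i}}{L^C_{ti}}\\ 0&-1&0\end{bmatrix}$. Inequalities between symmetric matrices are in the semidefinite (Loewner) sense. *)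

theory Defs
  imports "HOL-Analysis.Analysis"
begin

definition pos_def_mat :: "real^'n^'n \<Rightarrow> bool" where
  "pos_def_mat A \<longleftrightarrow> transpose A = A \<and> (\<forall>x. x \<noteq> 0 \<longrightarrow> x \<bullet> (A *v x) > 0)"

definition neg_semidef_mat :: "real^'n^'n \<Rightarrow> bool" where
  "neg_semidef_mat A \<longleftrightarrow> transpose A = A \<and> (\<forall>x. x \<bullet> (A *v x) \<le> 0)"

definition F_C :: "real \<Rightarrow> real \<Rightarrow> real \<Rightarrow> real \<Rightarrow> real \<Rightarrow> real \<Rightarrow> real^3^3" where
  "F_C C L R k1 k2 k3 =
     vector [vector [0, 1 / C, 0],
             vector [(k1 - 1) / L, (k2 - R) / L, k3 / L],
             vector [0, -1, 0]]"

definition P_C :: "real \<Rightarrow> real \<Rightarrow> real \<Rightarrow> real \<Rightarrow> real^3^3" where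
  "P_C \<eta> p22 p23 p33 =
     vector [vector [\<eta>, 0, 0],
             vector [0, p22, p23],
             vector [0, p23, p33]]"

end

theory Submission
  imports Defs
begin

lemma lin0: fixes a b :: real assumes "\<And>x. a*x + b \<le> 0" shows "a = 0"
proof (rule ccontr)
  assume "a \<noteq> 0"
  have "a*((1-b)/a) + b \<le> 0" by (rule assms)
  with \<open>a \<noteq> 0\<close> show False by simp
qed

lemma qf: fixes w :: "real^3" shows
 "w \<bullet> ((transpose (F_C C L R k1 k2 k3) ** P_C \<eta> p22 p23 p33
                 + P_C \<eta> p22 p23 p33 ** F_C C L R k1 k2 k3) *v w) =
  2*(\<eta>/C + p22*((k1-1)/L))*(w$1)*(w$2) + 2*(p23*((k1-1)/L))*(w$1)*(w$3)
  + 2*(p22*((k2-R)/L) - p23)*(w$2)^2 + 2*(p22*(k3/L) + p23*((k2-R)/L) - p33)*(w$2)*(w$3)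
  + 2*p23*(k3/L)*(w$3)^2"
  by (simp add: F_C_def P_C_def inner_vec_def matrix_vector_mult_def matrix_matrix_mult_def
      transpose_def sum_3 vector_3 algebra_simps power2_eq_square)
lemma Qm: "transpose (F_C C L R k1 k2 k3) ** P_C \<eta> p22 p23 p33
                 + P_C \<eta> p22 p23 p33 ** F_C C L R k1 k2 k3 =
   vector [vector [0, \<eta>/C + p22*((k1-1)/L), p23*((k1-1)/L)],
           vector [\<eta>/C + p22*((k1-1)/L), 2*(p22*((k2-R)/L) - p23), p22*(k3/L) + p23*((k2-R)/L) - p33],
           vector [p23*((k1-1)/L), p22*(k3/L) + p23*((k2-R)/L) - p33, 2*(p23*(k3/L))]]"
  by (simp add: vec_eq_iff forall_3 F_C_def P_C_def matrix_matrix_mult_def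
      transpose_def sum_3 vector_3 algebra_simps)

theorem lemma1:
  fixes C L R \<eta> k1 k2 k3 p22 p23 p33 :: real
    and w :: "real^3"
  assumes "C > 0" and "L > 0" and "R > 0" and "\<eta> > 0"
    and "pos_def_mat (P_C \<eta> p22 p23 p33)"
    and "neg_semidef_mat (transpose (F_C C L R k1 k2 k3) ** P_C \<eta> p22 p23 p33
                          + P_C \<eta> p22 p23 p33 ** F_C C L R k1 k2 k3)"
    and "transpose (F_C C L R k1 k2 k3) ** P_C \<eta> p22 p23 p33
           + P_C \<eta> p22 p23 p33 ** F_C C L R k1 k2 k3 \<noteq> 0"
  shows "w \<bullet> ((transpose (F_C C L R k1 k2 k3) ** P_C \<eta> p22 p23 p33
                 + P_C \<eta> p22 p23 p33 ** F_C C L R k1 k2 k3) *v w) = 0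
         \<longleftrightarrow> (\<exists>\<alpha> \<beta>. w = vector [\<alpha>, 0, \<beta>])"
proof -
  define A where "A = \<eta>/C + p22*((k1-1)/L)"
  define B where "B = p23*((k1-1)/L)"
  define D where "D = p22*((k2-R)/L) - p23"
  define E where "E = p22*(k3/L) + p23*((k2-R)/L) - p33"
  define G where "G = p23*(k3/L)"
  have q: "2*A*x*y + 2*B*x*z + 2*D*y^2 + 2*E*y*z + 2*G*z^2 \<le> 0" for x y z
  proof -
    have "(vector [x,y,z] :: real^3) \<bullet> ((transpose (F_C C L R k1 k2 k3) ** P_C \<eta> p22 p23 p33
                 + P_C \<eta> p22 p23 p33 ** F_C C L R k1 k2 k3) *v vector [x,y,z]) \<le> 0"
      using assms(6) unfolding neg_semidef_mat_def by blast
    thus ?thesis unfolding qf A_def B_def D_def E_def G_def by (simp add: vector_3)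
  qed
  have "(2*A)*x + 2*D \<le> 0" for x using q[of x 1 0] by (simp add: algebra_simps)
  hence "2*A = 0" by (rule lin0)
  hence "A = 0" by simp
  have "(2*B)*x + 2*G \<le> 0" for x using q[of x 0 1] by (simp add: algebra_simps)
  hence "2*B = 0" by (rule lin0)
  hence "B = 0" by simp
  have "p22*((k1-1)/L) \<noteq> 0" using \<open>A = 0\<close> assms(1,4) unfolding A_def by (auto simp: add_eq_0_iff)
  hence "(k1-1)/L \<noteq> 0" by auto
  hence "p23 = 0" using \<open>B = 0\<close> unfolding B_def by simp
  hence "G = 0" unfolding G_def by simp
  have "(2*E)*x + 2*D \<le> 0" for x using q[of 0 1 x] \<open>G = 0\<close> by (simp add: algebra_simps)
  hence "2*E = 0" by (rule lin0)
  hence "E = 0" by simp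
  have "D \<le> 0" using q[of 0 1 0] by simp
  have "D \<noteq> 0" using assms(7) \<open>A = 0\<close> \<open>B = 0\<close> \<open>E = 0\<close> \<open>G = 0\<close>
    unfolding Qm A_def[symmetric] B_def[symmetric] D_def[symmetric] E_def[symmetric] G_def[symmetric]
    by (auto simp: vec_eq_iff forall_3 vector_3)
  have val: "w \<bullet> ((transpose (F_C C L R k1 k2 k3) ** P_C \<eta> p22 p23 p33
                 + P_C \<eta> p22 p23 p33 ** F_C C L R k1 k2 k3) *v w) = 2*D*(w$2)^2"
    unfolding qf A_def[symmetric] B_def[symmetric] D_def[symmetric] E_def[symmetric] G_def[symmetric]
    using \<open>A = 0\<close> \<open>B = 0\<close> \<open>E = 0\<close> \<open>G = 0\<close> \<open>p23 = 0\<close> by simp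
  have "(\<exists>\<alpha> \<beta>. w = vector [\<alpha>, 0, \<beta>]) \<longleftrightarrow> w$2 = 0"
  proof
    assume "\<exists>\<alpha> \<beta>. w = vector [\<alpha>, 0, \<beta>]" thus "w$2 = 0" by (auto simp: vector_3)
  next
    assume "w$2 = 0"
    hence "w = vector [w$1, 0, w$3]" by (simp add: vec_eq_iff forall_3 vector_3)
    thus "\<exists>\<alpha> \<beta>. w = vector [\<alpha>, 0, \<beta>]" by blast
  qed
  thus ?thesis unfolding val using \<open>D \<noteq> 0\<close> by simp
qed

end
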